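(* Let $\mathbb{T}$ be a time scale, $t_1<t_2$ with $t_1,t_2\in\mathbb{T}$, $(\Omega,\mathcal{F},\mathbb{P})$ a probability space, and $\{W_t\}_{t\in\mathbb{T}}$ a Brownian motion on $\mathbb{T}$. Let $f(t,\omega)$ be an $L^2([t_1,t_2]_{\mathbb{T}})$-progressively measurable random function on $\mathbb{T}$ such that $\mathbb{E}f^2(t,\omega)$ is uniformly bounded on $[t_1,t_2]$. For each $n$ let $\pi^{(n)}: t_1=s_0<s_1<\dots<s_n=t_2$ be a partition with $s_0,\dots,s_n\in\mathbb{T}$ and $\max_{i=1,\dots,n}(\rho(s_i)-s_{i-1})<2^{-n}$. Say that the interval $(s_{i-1},s_i)$ is of class (a) if $(s_{i-1},s_i)\cap I=\emptyset$ for every $I\in\mathcal{I}$. Then $$\mathbb{P}\Big(\lim_{n\to\infty}\Big[\sum_{(a)}f(s_{i-1},\omega)(W_{s_i}-W_{s_{i-1}})^2-\sum_{(a)}f(s_{i-1},\omega)(s_i-s_{i-1})\Big]=0\Big)=1,$$ where $\sum_{(a)}$ denotes the sum over those $i\in\{1,\dots,n\}$ for which $(s_{i-1},s_i)$ is of class (a).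
   Context: A time scale $\mathbb{T}$ is a nonempty closed subset of $\mathbb{R}$; $[a,b]_{\mathbb{T}}=[a,b]\cap\mathbb{T}$; $\sigma(t)=\inf\{s\in\mathbb{T}:s>t\}$, $\rho(t)=\sup\{s\in\mathbb{T}:s<t\}$. A Brownian motion indexed by $\mathbb{T}$ is an adapted process $\{W_t\}$ on a filtered probability space with $W_0=0$ a.s., such that for $s<t$ in $\mathbb{T}$ the increment $W_t-W_s$ is independent of $\mathcal{F}_s$ and is $N(0,t-s)$, and $W$ is a.s. continuous on $\mathbb{T}$. $\mathcal{I}$ denotes the collection of open intervals $(a,b)$ with $a<b$, $a,b\in\mathbb{T}$ and $(a,b)\cap\mathbb{T}=\emptyset$ (i.e. $b=\sigma(a)>a$). *)

theory Defs
  imports "HOL-Probability.Probability"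
begin

definition time_scale :: "real set \<Rightarrow> bool" where
  "time_scale T \<longleftrightarrow> T \<noteq> {} \<and> closed T"

definition sigma_ts :: "real set \<Rightarrow> real \<Rightarrow> real" where
  "sigma_ts T t = (if \<exists>s\<in>T. s > t then Inf {s\<in>T. s > t} else t)"

definition rho_ts :: "real set \<Rightarrow> real \<Rightarrow> real" where
  "rho_ts T t = (if \<exists>s\<in>T. s < t then Sup {s\<in>T. s < t} else t)"

text \<open>The collection of gap intervals (a, sigma(a)) of T.\<close>
definition gap_intervals :: "real set \<Rightarrow> real set set" where
  "gap_intervals T = {{a<..<b} | a b. a \<in> T \<and> b \<in> T \<and> a < b \<and> {a<..<b} \<inter> T = {}}"

definition filtration_on :: "real set \<Rightarrow> 'a measure \<Rightarrow> (real \<Rightarrow> 'a measure) \<Rightarrow> bool" where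
  "filtration_on T M F \<longleftrightarrow>
     (\<forall>t\<in>T. space (F t) = space M \<and> sets (F t) \<subseteq> sets M) \<and>
     (\<forall>s\<in>T. \<forall>t\<in>T. s \<le> t \<longrightarrow> sets (F s) \<subseteq> sets (F t))"

definition brownian_motion_on ::
    "real set \<Rightarrow> 'a measure \<Rightarrow> (real \<Rightarrow> 'a measure) \<Rightarrow> (real \<Rightarrow> 'a \<Rightarrow> real) \<Rightarrow> bool" where
  "brownian_motion_on T M F W \<longleftrightarrow>
     prob_space M \<and> filtration_on T M F \<and>
     (\<forall>t\<in>T. W t \<in> borel_measurable (F t)) \<and>
     (0 \<in> T \<longrightarrow> (AE \<omega> in M. W 0 \<omega> = 0)) \<and>
     (\<forall>s\<in>T. \<forall>t\<in>T. s < t \<longrightarrow>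
        (\<forall>A\<in>sets (F s). \<forall>B\<in>sets borel.
           measure M (A \<inter> {\<omega>\<in>space M. W t \<omega> - W s \<omega> \<in> B})
             = measure M A * measure M {\<omega>\<in>space M. W t \<omega> - W s \<omega> \<in> B}) \<and>
        distributed M lborel (\<lambda>\<omega>. W t \<omega> - W s \<omega>) (normal_density 0 (sqrt (t - s)))) \<and>
     (AE \<omega> in M. continuous_on T (\<lambda>t. W t \<omega>))"

definition prog_measurable_on ::
    "real set \<Rightarrow> real \<Rightarrow> real \<Rightarrow> (real \<Rightarrow> 'a measure) \<Rightarrow> (real \<Rightarrow> 'a \<Rightarrow> real) \<Rightarrow> bool" where
  "prog_measurable_on T t1 t2 F f \<longleftrightarrow>
     (\<forall>t\<in>{t1..t2} \<inter> T.
        (\<lambda>(s, \<omega>). f s \<omega>) \<in> borel_measurable (restrict_space borel ({t1..t} \<inter> T) \<Otimes>\<^sub>M F t))"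

end

theory Submission
  imports Defs
begin

lemma indep_incr:
  fixes D g :: "'a \<Rightarrow> real" and h :: "real \<Rightarrow> real"
  assumes P: "prob_space M" and sub: "space G = space M" "sets G \<subseteq> sets M"
  and D: "D \<in> borel_measurable M"
  and ind: "\<forall>A\<in>sets G. \<forall>B\<in>sets borel. measure M (A \<inter> {\<omega>\<in>space M. D \<omega> \<in> B}) = measure M A * measure M {\<omega>\<in>space M. D \<omega> \<in> B}"
  and g: "g \<in> borel_measurable G" and h: "h \<in> borel_measurable borel"
  shows "prob_space.indep_var M borel g borel (\<lambda>\<omega>. h (D \<omega>))"
proof -
  interpret prob_space M by fact
  have gM: "g \<in> borel_measurable M"
    using g sub unfolding measurable_def by auto
  have hD: "(\<lambda>\<omega>. h (D \<omega>)) \<in> borel_measurable M" using h D by measurable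
  have s1: "sigma_sets (space M) {g -` A \<inter> space M | A. A \<in> sets borel} \<subseteq> sets G"
  proof -
    have "sigma_sets (space G) {g -` A \<inter> space M | A. A \<in> sets borel} \<subseteq> sets G"
      by (rule sets.sigma_sets_subset) (use g sub in \<open>auto simp: measurable_def\<close>)
    then show ?thesis using sub by simp
  qed
  let ?V = "vimage_algebra (space M) D borel"
  have e2: "sets ?V = {D -` A \<inter> space M | A. A \<in> sets (borel :: real measure)}"
    using sets_vimage_algebra2[of D "space M" borel] D
    by (auto simp: measurable_def)
  have sV: "space ?V = space M" by simp
  have s2: "sigma_sets (space M) {(\<lambda>\<omega>. h (D \<omega>)) -` A \<inter> space M | A. A \<in> sets (borel :: real measure)}
      \<subseteq> {D -` A \<inter> space M | A. A \<in> sets (borel :: real measure)}"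
  proof -
    have "sigma_sets (space ?V) {(\<lambda>\<omega>. h (D \<omega>)) -` A \<inter> space M | A. A \<in> sets (borel :: real measure)} \<subseteq> sets ?V"
    proof (rule sets.sigma_sets_subset, safe)
      fix A :: "real set" assume "A \<in> sets borel"
      then have "h -` A \<in> sets borel" using h measurable_sets[OF h] by auto
      moreover have "(\<lambda>\<omega>. h (D \<omega>)) -` A \<inter> space M = D -` (h -` A) \<inter> space M" by auto
      ultimately show "(\<lambda>\<omega>. h (D \<omega>)) -` A \<inter> space M \<in> sets ?V" unfolding e2 by blast
    qed
    then show ?thesis using e2 by simp
  qed
  show ?thesis
    unfolding indep_var_eq
  proof (intro conjI)
    show "random_variable borel g" by (rule gM)
    show "random_variable borel (\<lambda>\<omega>. h (D \<omega>))" by (rule hD)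
    show "indep_set (sigma_sets (space M) {g -` A \<inter> space M |A. A \<in> sets borel})
     (sigma_sets (space M) {(\<lambda>\<omega>. h (D \<omega>)) -` A \<inter> space M |A. A \<in> sets borel})"
      unfolding indep_sets2_eq
    proof (intro conjI ballI)
      show "sigma_sets (space M) {g -` A \<inter> space M |A. A \<in> sets borel} \<subseteq> events" using s1 sub by auto
      show "sigma_sets (space M) {(\<lambda>\<omega>. h (D \<omega>)) -` A \<inter> space M |A. A \<in> sets borel} \<subseteq> events"
        using s2 D by auto
      fix a b assume a: "a \<in> sigma_sets (space M) {g -` A \<inter> space M |A. A \<in> sets borel}"
        and b: "b \<in> sigma_sets (space M) {(\<lambda>\<omega>. h (D \<omega>)) -` A \<inter> space M |A. A \<in> sets borel}"
      from a s1 have a': "a \<in> sets G" by auto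
      from b s2 obtain B where B: "B \<in> sets borel" "b = D -` B \<inter> space M" by auto
      have "b = {\<omega>\<in>space M. D \<omega> \<in> B}" using B by auto
      then show "prob (a \<inter> b) = prob a * prob b" using ind a' B by simp
    qed
  qed
qed

lemma normal_moments:
  fixes D :: "'a \<Rightarrow> real"
  assumes dist: "distributed M lborel D (normal_density 0 (sqrt v))" and v: "v > 0"
  shows "integrable M (\<lambda>\<omega>. (D \<omega>)^2)" "(\<integral>\<omega>. (D \<omega>)^2 \<partial>M) = v"
    "integrable M (\<lambda>\<omega>. (D \<omega>)^4)" "(\<integral>\<omega>. (D \<omega>)^4 \<partial>M) = 3 * v^2"
proof -
  have sp: "sqrt v > 0" using v by simp
  have nn: "\<And>x. 0 \<le> normal_density 0 (sqrt v) x" by (simp add: normal_density_nonneg)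
  have i2: "integrable lborel (\<lambda>x. normal_density 0 (sqrt v) x * x^2)"
    using integrable_normal_moment[where \<sigma>="sqrt v" and \<mu>=0 and k=2] sp by simp
  have i4: "integrable lborel (\<lambda>x. normal_density 0 (sqrt v) x * x^4)"
    using integrable_normal_moment[where \<sigma>="sqrt v" and \<mu>=0 and k=4] sp by simp
  show "integrable M (\<lambda>\<omega>. (D \<omega>)^2)"
    using distributed_integrable[OF dist, of "\<lambda>x. x^2"] nn i2 by simp
  show "integrable M (\<lambda>\<omega>. (D \<omega>)^4)"
    using distributed_integrable[OF dist, of "\<lambda>x. x^4"] nn i4 by simp
  have "(\<integral>x. normal_density 0 (sqrt v) x * x^2 \<partial>lborel) = v"
    using integral_normal_moment_even[OF sp, of 0 1] v by (simp add: fact_numeral)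
  then show "(\<integral>\<omega>. (D \<omega>)^2 \<partial>M) = v"
    using distributed_integral[OF dist, of "\<lambda>x. x^2"] nn by simp
  have "(\<integral>x. normal_density 0 (sqrt v) x * x^4 \<partial>lborel) = 3 * v^2"
    using integral_normal_moment_even[OF sp, of 0 2] v by (simp add: fact_numeral power2_eq_square field_simps)
  then show "(\<integral>\<omega>. (D \<omega>)^4 \<partial>M) = 3 * v^2"
    using distributed_integral[OF dist, of "\<lambda>x. x^4"] nn by simp
qed

lemma BM_parts:
  assumes BM: "brownian_motion_on T M F W"
  shows "prob_space M" "\<And>t. t \<in> T \<Longrightarrow> space (F t) = space M" "\<And>t. t \<in> T \<Longrightarrow> sets (F t) \<subseteq> sets M"
    "\<And>s t. s \<in> T \<Longrightarrow> t \<in> T \<Longrightarrow> s \<le> t \<Longrightarrow> sets (F s) \<subseteq> sets (F t)"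
    "\<And>t. t \<in> T \<Longrightarrow> W t \<in> borel_measurable (F t)"
    "\<And>s t. s \<in> T \<Longrightarrow> t \<in> T \<Longrightarrow> s < t \<Longrightarrow> \<forall>A\<in>sets (F s). \<forall>B\<in>sets borel.
           measure M (A \<inter> {\<omega>\<in>space M. W t \<omega> - W s \<omega> \<in> B})
             = measure M A * measure M {\<omega>\<in>space M. W t \<omega> - W s \<omega> \<in> B}"
    "\<And>s t. s \<in> T \<Longrightarrow> t \<in> T \<Longrightarrow> s < t \<Longrightarrow> distributed M lborel (\<lambda>\<omega>. W t \<omega> - W s \<omega>) (normal_density 0 (sqrt (t - s)))"
  using BM unfolding brownian_motion_on_def filtration_on_def by blast+

lemma sub_meas:
  assumes "space G = space M" "sets G \<subseteq> sets M" "g \<in> borel_measurable G"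
  shows "g \<in> borel_measurable M"
  using assms unfolding measurable_def by auto

lemma BM_meas:
  assumes BM: "brownian_motion_on T M F W" and t: "t \<in> T"
  shows "W t \<in> borel_measurable M"
  by (rule sub_meas[OF BM_parts(2)[OF BM t] BM_parts(3)[OF BM t] BM_parts(5)[OF BM t]])

lemma incr_facts:
  fixes W :: "real \<Rightarrow> 'a \<Rightarrow> real" and g :: "'a \<Rightarrow> real"
  assumes BM: "brownian_motion_on T M F W" and ab: "a \<in> T" "b \<in> T" "a < b"
    and g: "g \<in> borel_measurable (F a)"
  shows "integrable M g \<Longrightarrow> integrable M (\<lambda>\<omega>. g \<omega> * ((W b \<omega> - W a \<omega>)^2 - (b - a)))
          \<and> (\<integral>\<omega>. g \<omega> * ((W b \<omega> - W a \<omega>)^2 - (b - a)) \<partial>M) = 0"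
    and "integrable M (\<lambda>\<omega>. (g \<omega>)^2) \<Longrightarrow> integrable M (\<lambda>\<omega>. (g \<omega> * ((W b \<omega> - W a \<omega>)^2 - (b - a)))^2)
          \<and> (\<integral>\<omega>. (g \<omega> * ((W b \<omega> - W a \<omega>)^2 - (b - a)))^2 \<partial>M) = (\<integral>\<omega>. (g \<omega>)^2 \<partial>M) * (2 * (b - a)^2)"
proof -
  have P: "prob_space M" by (rule BM_parts(1)[OF BM])
  interpret prob_space M by fact
  have sub: "space (F a) = space M" "sets (F a) \<subseteq> sets M"
    by (rule BM_parts(2)[OF BM ab(1)], rule BM_parts(3)[OF BM ab(1)])
  define D where "D = (\<lambda>\<omega>. W b \<omega> - W a \<omega>)"
  have Dm: "D \<in> borel_measurable M" unfolding D_def using BM_meas[OF BM ab(1)] BM_meas[OF BM ab(2)] by measurable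
  have ind: "\<forall>A\<in>sets (F a). \<forall>B\<in>sets borel. measure M (A \<inter> {\<omega>\<in>space M. D \<omega> \<in> B}) = measure M A * measure M {\<omega>\<in>space M. D \<omega> \<in> B}"
    and dist: "distributed M lborel D (normal_density 0 (sqrt (b - a)))"
    using BM_parts(6)[OF BM ab] BM_parts(7)[OF BM ab] unfolding D_def by simp_all
  have v: "b - a > 0" using ab by simp
  note mom = normal_moments[OF dist v]
  have gM: "g \<in> borel_measurable M" using sub_meas[OF sub g] .
  have i1: "integrable M (\<lambda>\<omega>. (D \<omega>)^2 - (b - a))" using mom(1) by simp
  have e1: "(\<integral>\<omega>. (D \<omega>)^2 - (b - a) \<partial>M) = 0" using mom(1,2) prob_space by simp
  have eq2: "\<And>\<omega>. ((D \<omega>)^2 - (b - a))^2 = (D \<omega>)^4 - 2 * (b - a) * (D \<omega>)^2 + (b - a)^2"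
    by (simp add: power2_eq_square power4_eq_xxxx algebra_simps)
  have i2: "integrable M (\<lambda>\<omega>. ((D \<omega>)^2 - (b - a))^2)" unfolding eq2 using mom(1,3) by simp
  have e2: "(\<integral>\<omega>. ((D \<omega>)^2 - (b - a))^2 \<partial>M) = 2 * (b - a)^2"
    unfolding eq2 using mom prob_space by (simp add: power2_eq_square)
  show "integrable M g \<Longrightarrow> integrable M (\<lambda>\<omega>. g \<omega> * ((W b \<omega> - W a \<omega>)^2 - (b - a)))
          \<and> (\<integral>\<omega>. g \<omega> * ((W b \<omega> - W a \<omega>)^2 - (b - a)) \<partial>M) = 0"
  proof -
    assume gi: "integrable M g"
    have iv: "indep_var borel g borel (\<lambda>\<omega>. (\<lambda>x. x^2 - (b - a)) (D \<omega>))"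
      by (rule indep_incr[OF P sub Dm ind g]) measurable
    show ?thesis
      using indep_var_lebesgue_integral[OF iv gi] indep_var_integrable[OF iv gi] i1 e1
      unfolding D_def by simp
  qed
  show "integrable M (\<lambda>\<omega>. (g \<omega>)^2) \<Longrightarrow> integrable M (\<lambda>\<omega>. (g \<omega> * ((W b \<omega> - W a \<omega>)^2 - (b - a)))^2)
          \<and> (\<integral>\<omega>. (g \<omega> * ((W b \<omega> - W a \<omega>)^2 - (b - a)))^2 \<partial>M) = (\<integral>\<omega>. (g \<omega>)^2 \<partial>M) * (2 * (b - a)^2)"
  proof -
    assume gi: "integrable M (\<lambda>\<omega>. (g \<omega>)^2)"
    have g2: "(\<lambda>\<omega>. (g \<omega>)^2) \<in> borel_measurable (F a)" using g by measurable
    have iv: "indep_var borel (\<lambda>\<omega>. (g \<omega>)^2) borel (\<lambda>\<omega>. (\<lambda>x. (x^2 - (b - a))^2) (D \<omega>))"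
      by (rule indep_incr[OF P sub Dm ind g2]) measurable
    have eq: "\<And>\<omega>. (g \<omega> * ((W b \<omega> - W a \<omega>)^2 - (b - a)))^2 = (g \<omega>)^2 * ((D \<omega>)^2 - (b - a))^2"
      unfolding D_def by (simp add: power_mult_distrib)
    show ?thesis unfolding eq
      using indep_var_lebesgue_integral[OF iv gi] indep_var_integrable[OF iv gi] i2 e2 by simp
  qed
qed

lemma integrable_L2_mult:
  fixes a b :: "'a \<Rightarrow> real"
  assumes "a \<in> borel_measurable M" "b \<in> borel_measurable M"
    "integrable M (\<lambda>x. (a x)^2)" "integrable M (\<lambda>x. (b x)^2)"
  shows "integrable M (\<lambda>x. a x * b x)"
proof (rule Bochner_Integration.integrable_bound[of _ "\<lambda>x. (a x)^2 + (b x)^2"])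
  show "integrable M (\<lambda>x. (a x)^2 + (b x)^2)" using assms by simp
  show "(\<lambda>x. a x * b x) \<in> borel_measurable M" using assms by measurable
  show "AE x in M. norm (a x * b x) \<le> norm ((a x)^2 + (b x)^2)"
  proof (rule AE_I2)
    fix x
    have "2 * \<bar>a x\<bar> * \<bar>b x\<bar> \<le> (a x)^2 + (b x)^2"
      using sum_squares_bound[of "\<bar>a x\<bar>" "\<bar>b x\<bar>"] by simp
    moreover have "0 \<le> \<bar>a x\<bar> * \<bar>b x\<bar>" by simp
    ultimately have h: "\<bar>a x\<bar> * \<bar>b x\<bar> \<le> (a x)^2 + (b x)^2" by linarith
    then show "norm (a x * b x) \<le> norm ((a x)^2 + (b x)^2)"
      by (simp add: abs_mult)
  qed
qed

lemma AE_tendsto_of_L2: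
  fixes Y :: "nat \<Rightarrow> 'a \<Rightarrow> real"
  assumes m: "\<And>n. Y n \<in> borel_measurable M"
    and i: "\<And>n. integrable M (\<lambda>\<omega>. (Y n \<omega>)^2)"
    and b: "\<And>n. (\<integral>\<omega>. (Y n \<omega>)^2 \<partial>M) \<le> K * (1/2)^n"
  shows "AE \<omega> in M. (\<lambda>n. Y n \<omega>) \<longlonglongrightarrow> 0"
proof -
  have K: "K \<ge> 0"
  proof -
    have "0 \<le> (\<integral>\<omega>. (Y 0 \<omega>)^2 \<partial>M)" by (rule integral_nonneg_AE) simp
    then show ?thesis using b[of 0] by (simp only: power_0 mult_1_right)
  qed
  have sK: "summable (\<lambda>n. K * (1/2::real)^n)" by (intro summable_mult summable_geometric) simp
  have "(\<integral>\<^sup>+\<omega>. (\<Sum>n. ennreal ((Y n \<omega>)^2)) \<partial>M) = (\<Sum>n. \<integral>\<^sup>+\<omega>. ennreal ((Y n \<omega>)^2) \<partial>M)"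
    by (rule nn_integral_suminf) (use m in measurable)
  also have "\<dots> = (\<Sum>n. ennreal (\<integral>\<omega>. (Y n \<omega>)^2 \<partial>M))"
    by (intro suminf_cong nn_integral_eq_integral i) simp
  also have "\<dots> \<le> (\<Sum>n. ennreal (K * (1/2)^n))"
    by (intro suminf_le ennreal_leI b) auto
  also have "\<dots> = ennreal (\<Sum>n. K * (1/2)^n)"
    by (rule suminf_ennreal2) (use K sK in auto)
  finally have le: "(\<integral>\<^sup>+\<omega>. (\<Sum>n. ennreal ((Y n \<omega>)^2)) \<partial>M) \<le> ennreal (\<Sum>n. K * (1/2)^n)" .
  have "(\<integral>\<^sup>+\<omega>. (\<Sum>n. ennreal ((Y n \<omega>)^2)) \<partial>M) \<noteq> \<infinity>"
  proof
    assume "(\<integral>\<^sup>+\<omega>. (\<Sum>n. ennreal ((Y n \<omega>)^2)) \<partial>M) = \<infinity>"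
    with le show False by (simp add: top_unique)
  qed
  then have "AE \<omega> in M. (\<Sum>n. ennreal ((Y n \<omega>)^2)) \<noteq> \<infinity>"
    by (intro nn_integral_PInf_AE) (use m in measurable)
  then show ?thesis
  proof (rule AE_mp, intro AE_I2 impI)
    fix \<omega> assume "(\<Sum>n. ennreal ((Y n \<omega>)^2)) \<noteq> \<infinity>"
    then have "summable (\<lambda>n. (Y n \<omega>)^2)" by (intro summable_suminf_not_top) auto
    then have "(\<lambda>n. (Y n \<omega>)^2) \<longlonglongrightarrow> 0" by (rule summable_LIMSEQ_zero)
    then have "(\<lambda>n. sqrt ((Y n \<omega>)^2)) \<longlonglongrightarrow> sqrt 0" by (rule tendsto_real_sqrt)
    then have "(\<lambda>n. \<bar>Y n \<omega>\<bar>) \<longlonglongrightarrow> 0" by simp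
    then show "(\<lambda>n. Y n \<omega>) \<longlonglongrightarrow> 0" by (rule tendsto_rabs_zero_cancel)
  qed
qed

lemma part_le:
  fixes s :: "nat \<Rightarrow> real"
  assumes "\<And>i. i < N \<Longrightarrow> s i < s (Suc i)" "i \<le> j" "j \<le> N"
  shows "s i \<le> s j"
  using assms(2,3)
proof (induction j)
  case 0 then show ?case by simp
next
  case (Suc j)
  show ?case
  proof (cases "i = Suc j")
    case False
    then have "s i \<le> s j" using Suc by simp
    also have "s j < s (Suc j)" using assms(1) Suc by simp
    finally show ?thesis by simp
  qed simp
qed

lemma telescope:
  fixes s :: "nat \<Rightarrow> real"
  shows "(\<Sum>i\<in>{1..k}. s i - s (i - 1)) = s k - s 0"
  by (induction k) (auto simp: atLeastAtMostSuc_conv)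

lemma classa_rho:
  assumes T: "closed T" and ab: "a \<in> T" "b \<in> T" "a < b"
    and cl: "\<forall>I\<in>gap_intervals T. {a<..<b} \<inter> I = {}"
  shows "b \<le> rho_ts T b"
proof (rule ccontr)
  assume nle: "\<not> b \<le> rho_ts T b"
  let ?S = "{x\<in>T. x < b}"
  have ex: "\<exists>x\<in>T. x < b" using ab by auto
  have Sne: "?S \<noteq> {}" using ab by auto
  have bdd: "bdd_above ?S" by (rule bdd_aboveI[of _ b]) auto
  define r where "r = Sup ?S"
  have rr: "rho_ts T b = r" unfolding rho_ts_def r_def using ex by simp
  have rb: "r < b" using nle rr by simp
  have ar: "a \<le> r" unfolding r_def by (rule cSup_upper) (use ab bdd in auto)
  have "r \<in> closure ?S" unfolding r_def by (rule closure_contains_Sup[OF Sne bdd])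
  also have "closure ?S \<subseteq> T" using T closure_minimal[of ?S T] by auto
  finally have rT: "r \<in> T" .
  have disj: "{r<..<b} \<inter> T = {}"
  proof (safe)
    fix x assume "x \<in> {r<..<b}" "x \<in> T"
    then have "x \<in> ?S" "r < x" by auto
    moreover have "x \<le> r" unfolding r_def by (rule cSup_upper) (use \<open>x \<in> ?S\<close> bdd in auto)
    ultimately show "x \<in> {}" by simp
  qed
  have "{r<..<b} \<in> gap_intervals T" unfolding gap_intervals_def using rT ab rb disj by blast
  with cl have "{a<..<b} \<inter> {r<..<b} = {}" by blast
  moreover have "(r + b) / 2 \<in> {a<..<b} \<inter> {r<..<b}" using ar rb by auto
  ultimately show False by blast
qed

lemma f_meas:
  assumes prog: "prog_measurable_on T t1 t2 F f" and t: "t \<in> {t1..t2} \<inter> T"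
  shows "f t \<in> borel_measurable (F t)"
proof -
  have m: "(\<lambda>(s, \<omega>). f s \<omega>) \<in> borel_measurable (restrict_space borel ({t1..t} \<inter> T) \<Otimes>\<^sub>M F t)"
    using prog t unfolding prog_measurable_on_def by blast
  have "t \<in> space (restrict_space borel ({t1..t} \<inter> T))" using t by (simp add: space_restrict_space)
  from measurable_Pair2[OF m this] show ?thesis by simp
qed

theorem lemma2:
  fixes T :: "real set" and t1 t2 :: real
    and M :: "'a measure" and F :: "real \<Rightarrow> 'a measure"
    and W :: "real \<Rightarrow> 'a \<Rightarrow> real" and f :: "real \<Rightarrow> 'a \<Rightarrow> real"
    and N :: "nat \<Rightarrow> nat" and s :: "nat \<Rightarrow> nat \<Rightarrow> real"
  assumes TS: "time_scale T"
    and t12: "t1 \<in> T" "t2 \<in> T" "t1 < t2"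
    and P: "prob_space M"
    and BM: "brownian_motion_on T M F W"
    and prog: "prog_measurable_on T t1 t2 F f"
    and bdd: "\<exists>C. \<forall>t\<in>{t1..t2} \<inter> T.
                 integrable M (\<lambda>\<omega>. (f t \<omega>)\<^sup>2) \<and> (\<integral>\<omega>. (f t \<omega>)\<^sup>2 \<partial>M) \<le> C"
    and part_start: "\<And>n. s n 0 = t1"
    and part_end: "\<And>n. s n (N n) = t2"
    and part_in: "\<And>n i. i \<le> N n \<Longrightarrow> s n i \<in> T"
    and part_mono: "\<And>n i. i < N n \<Longrightarrow> s n i < s n (Suc i)"
    and mesh: "\<And>n i. 1 \<le> i \<Longrightarrow> i \<le> N n \<Longrightarrow> rho_ts T (s n i) - s n (i - 1) < (1/2) ^ n"
  shows "AE \<omega> in M.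
           (\<lambda>n. (\<Sum>i\<in>{i\<in>{1..N n}. \<forall>I\<in>gap_intervals T. {s n (i - 1)<..<s n i} \<inter> I = {}}.
                    f (s n (i - 1)) \<omega> * (W (s n i) \<omega> - W (s n (i - 1)) \<omega>)\<^sup>2)
               - (\<Sum>i\<in>{i\<in>{1..N n}. \<forall>I\<in>gap_intervals T. {s n (i - 1)<..<s n i} \<inter> I = {}}.
                    f (s n (i - 1)) \<omega> * (s n i - s n (i - 1))))
           \<longlonglongrightarrow> 0"
proof -
  interpret prob_space M by fact
  obtain C where C: "\<And>t. t \<in> {t1..t2} \<inter> T \<Longrightarrow> integrable M (\<lambda>\<omega>. (f t \<omega>)\<^sup>2) \<and> (\<integral>\<omega>. (f t \<omega>)\<^sup>2 \<partial>M) \<le> C"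
    using bdd by blast
  have C0: "0 \<le> C"
  proof -
    have "0 \<le> (\<integral>\<omega>. (f t1 \<omega>)\<^sup>2 \<partial>M)" by (rule integral_nonneg_AE) simp
    moreover have "(\<integral>\<omega>. (f t1 \<omega>)\<^sup>2 \<partial>M) \<le> C" using C[of t1] t12 by auto
    ultimately show ?thesis by linarith
  qed
  have clT: "closed T" using TS unfolding time_scale_def by simp
  define cls where "cls n = {i\<in>{1..N n}. \<forall>I\<in>gap_intervals T. {s n (i - 1)<..<s n i} \<inter> I = {}}" for n
  define Z where "Z n i \<omega> = f (s n (i - 1)) \<omega> * ((W (s n i) \<omega> - W (s n (i - 1)) \<omega>)^2 - (s n i - s n (i - 1)))"
    for n i \<omega>
  define Y where "Y n \<omega> = (\<Sum>i\<in>cls n. Z n i \<omega>)" for n \<omega>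
  have Wm: "\<And>t. t \<in> T \<Longrightarrow> W t \<in> borel_measurable M" by (rule BM_meas[OF BM])
  have fmF: "\<And>t. t \<in> {t1..t2} \<inter> T \<Longrightarrow> f t \<in> borel_measurable (F t)" by (rule f_meas[OF prog])
  have fmM: "f t \<in> borel_measurable M" if t: "t \<in> {t1..t2} \<inter> T" for t
  proof -
    have tT: "t \<in> T" using t by simp
    show ?thesis by (rule sub_meas[OF BM_parts(2)[OF BM tT] BM_parts(3)[OF BM tT] fmF[OF t]])
  qed
  have smono: "\<And>n i j. i \<le> j \<Longrightarrow> j \<le> N n \<Longrightarrow> s n i \<le> s n j"
    using part_mono by (intro part_le[where N="N _"]) auto
  have sT: "s n (i - 1) \<in> T" "s n i \<in> T" "s n (i - 1) < s n i" "t1 \<le> s n (i - 1)" "s n (i - 1) \<le> t2"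
    "s n (i - 1) \<in> {t1..t2} \<inter> T"
    if i: "i \<in> {1..N n}" for n i
  proof -
    show a: "s n (i - 1) \<in> T" "s n i \<in> T" using part_in i by auto
    show b: "s n (i - 1) < s n i" using part_mono[of "i - 1" n] i by auto
    show c: "t1 \<le> s n (i - 1)" using smono[of 0 "i - 1" n] i part_start by auto
    show d: "s n (i - 1) \<le> t2" using smono[of "i - 1" "N n" n] i part_end by auto
    show "s n (i - 1) \<in> {t1..t2} \<inter> T" using a c d by auto
  qed
  have Zm: "Z n i \<in> borel_measurable M" if i: "i \<in> {1..N n}" for n i
    unfolding Z_def using Wm[OF sT(1)[OF i]] Wm[OF sT(2)[OF i]] fmM[OF sT(6)[OF i]] by measurable
  have Z2: "integrable M (\<lambda>\<omega>. (Z n i \<omega>)^2) \<and> (\<integral>\<omega>. (Z n i \<omega>)^2 \<partial>M)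
       = (\<integral>\<omega>. (f (s n (i - 1)) \<omega>)^2 \<partial>M) * (2 * (s n i - s n (i - 1))^2)"
    if i: "i \<in> {1..N n}" for n i
    unfolding Z_def
    by (rule incr_facts(2)[OF BM sT(1,2,3)[OF i] fmF[OF sT(6)[OF i]]]) (use C[OF sT(6)[OF i]] in blast)
  have cross: "integrable M (\<lambda>\<omega>. Z n i \<omega> * Z n j \<omega>) \<and> (\<integral>\<omega>. Z n i \<omega> * Z n j \<omega> \<partial>M) = 0"
    if i: "i \<in> {1..N n}" and j: "j \<in> {1..N n}" and ij: "i < j" for n i j
  proof -
    let ?a = "s n (j - 1)"
    have ajT: "?a \<in> T" using sT(1)[OF j] .
    have le1: "s n i \<le> ?a" using smono[of i "j - 1" n] ij j by auto
    have le0: "s n (i - 1) \<le> ?a" using le1 sT(3)[OF i] by linarith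
    have spa: "space (F ?a) = space M" using BM_parts(2)[OF BM ajT] .
    have sub: "space (F t) = space (F ?a) \<and> sets (F t) \<subseteq> sets (F ?a)" if "t \<in> T" "t \<le> ?a" for t
      using BM_parts(2)[OF BM that(1)] spa BM_parts(4)[OF BM that(1) ajT that(2)] by simp
    have m1: "W (s n i) \<in> borel_measurable (F ?a)"
      using sub[OF sT(2)[OF i] le1] BM_parts(5)[OF BM sT(2)[OF i]] sub_meas by blast
    have m0: "W (s n (i - 1)) \<in> borel_measurable (F ?a)"
      using sub[OF sT(1)[OF i] le0] BM_parts(5)[OF BM sT(1)[OF i]] sub_meas by blast
    have mf: "f (s n (i - 1)) \<in> borel_measurable (F ?a)"
      using sub[OF sT(1)[OF i] le0] fmF[OF sT(6)[OF i]] sub_meas by blast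
    have mfj: "f ?a \<in> borel_measurable (F ?a)" using fmF[OF sT(6)[OF j]] .
    have gm: "(\<lambda>\<omega>. Z n i \<omega> * f ?a \<omega>) \<in> borel_measurable (F ?a)"
      unfolding Z_def using m1 m0 mf mfj by measurable
    have gi: "integrable M (\<lambda>\<omega>. Z n i \<omega> * f ?a \<omega>)"
      by (rule integrable_L2_mult[OF Zm[OF i] fmM[OF sT(6)[OF j]]]) (use Z2[OF i] C[OF sT(6)[OF j]] in blast)+
    have eq: "(\<lambda>\<omega>. Z n i \<omega> * Z n j \<omega>) = (\<lambda>\<omega>. (Z n i \<omega> * f ?a \<omega>) * ((W (s n j) \<omega> - W ?a \<omega>)^2 - (s n j - ?a)))"
      by (simp add: Z_def mult.assoc)
    show ?thesis unfolding eq
      by (rule incr_facts(1)[OF BM sT(1,2,3)[OF j] gm gi])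
  qed
  have clsub: "cls n \<subseteq> {1..N n}" for n unfolding cls_def by auto
  have fincls: "finite (cls n)" for n using clsub[of n] finite_subset by blast
  have small: "s n i - s n (i - 1) \<le> (1/2)^n" if i: "i \<in> cls n" for n i
  proof -
    have i': "i \<in> {1..N n}" using i clsub by blast
    have cl: "\<forall>I\<in>gap_intervals T. {s n (i - 1)<..<s n i} \<inter> I = {}" using i unfolding cls_def by blast
    have "s n i \<le> rho_ts T (s n i)" by (rule classa_rho[OF clT sT(1,2,3)[OF i'] cl])
    moreover have "rho_ts T (s n i) - s n (i - 1) < (1/2)^n" using mesh[of i n] i' by auto
    ultimately show ?thesis by linarith
  qed
  have Ym: "Y n \<in> borel_measurable M" for n
    unfolding Y_def by (rule borel_measurable_sum) (use Zm clsub in blast)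
  have Ybound: "integrable M (\<lambda>\<omega>. (Y n \<omega>)^2) \<and> (\<integral>\<omega>. (Y n \<omega>)^2 \<partial>M) \<le> (2 * C * (t2 - t1)) * (1/2)^n" for n
  proof -
    let ?A = "cls n"
    have inA: "i \<in> {1..N n}" if "i \<in> ?A" for i using that clsub by blast
    have YY: "(\<lambda>\<omega>. (Y n \<omega>)^2) = (\<lambda>\<omega>. \<Sum>i\<in>?A. \<Sum>j\<in>?A. Z n i \<omega> * Z n j \<omega>)"
      by (simp add: Y_def power2_eq_square sum_product)
    have intij: "integrable M (\<lambda>\<omega>. Z n i \<omega> * Z n j \<omega>)" if "i \<in> ?A" "j \<in> ?A" for i j
      using Z2[OF inA[OF that(1)]] Z2[OF inA[OF that(2)]]
      by (intro integrable_L2_mult[OF Zm[OF inA[OF that(1)]] Zm[OF inA[OF that(2)]]]) blast+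
         
    have intI: "integrable M (\<lambda>\<omega>. \<Sum>j\<in>?A. Z n i \<omega> * Z n j \<omega>)" if "i \<in> ?A" for i
      using intij[OF that] by (intro Bochner_Integration.integrable_sum) blast
    have intY: "integrable M (\<lambda>\<omega>. (Y n \<omega>)^2)"
      unfolding YY by (rule Bochner_Integration.integrable_sum) (erule intI)
    have inner: "(\<Sum>j\<in>?A. \<integral>\<omega>. Z n i \<omega> * Z n j \<omega> \<partial>M) = (\<integral>\<omega>. (Z n i \<omega>)^2 \<partial>M)" if i: "i \<in> ?A" for i
    proof -
      have "(\<Sum>j\<in>?A. \<integral>\<omega>. Z n i \<omega> * Z n j \<omega> \<partial>M) = (\<Sum>j\<in>?A. if j = i then (\<integral>\<omega>. (Z n i \<omega>)^2 \<partial>M) else 0)"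
      proof (rule sum.cong[OF refl])
        fix j assume j: "j \<in> ?A"
        show "(\<integral>\<omega>. Z n i \<omega> * Z n j \<omega> \<partial>M) = (if j = i then (\<integral>\<omega>. (Z n i \<omega>)^2 \<partial>M) else 0)"
        proof (cases "j = i")
          case True then show ?thesis by (simp add: power2_eq_square)
        next
          case False
          show ?thesis
          proof (cases "i < j")
            case True
            have "(\<integral>\<omega>. Z n i \<omega> * Z n j \<omega> \<partial>M) = 0" by (rule conjunct2[OF cross[OF inA[OF i] inA[OF j] True]])
            then show ?thesis using False by simp
          next
            case False2: False
            then have "j < i" using False by simp
            then have "(\<integral>\<omega>. Z n j \<omega> * Z n i \<omega> \<partial>M) = 0" by (rule conjunct2[OF cross[OF inA[OF j] inA[OF i]]])
            moreover have "(\<lambda>\<omega>. Z n i \<omega> * Z n j \<omega>) = (\<lambda>\<omega>. Z n j \<omega> * Z n i \<omega>)" by (rule ext) (rule mult.commute)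
            ultimately show ?thesis using False by simp
          qed
        qed
      qed
      also have "\<dots> = (\<integral>\<omega>. (Z n i \<omega>)^2 \<partial>M)" using fincls[of n] i by simp
      finally show ?thesis .
    qed
    have "(\<integral>\<omega>. (Y n \<omega>)^2 \<partial>M) = (\<Sum>i\<in>?A. \<Sum>j\<in>?A. \<integral>\<omega>. Z n i \<omega> * Z n j \<omega> \<partial>M)"
      unfolding YY
    proof (subst Bochner_Integration.integral_sum)
      show "\<And>i. i \<in> ?A \<Longrightarrow> integrable M (\<lambda>\<omega>. \<Sum>j\<in>?A. Z n i \<omega> * Z n j \<omega>)" by (rule intI)
      show "(\<Sum>i\<in>?A. \<integral>\<omega>. (\<Sum>j\<in>?A. Z n i \<omega> * Z n j \<omega>) \<partial>M) = (\<Sum>i\<in>?A. \<Sum>j\<in>?A. \<integral>\<omega>. Z n i \<omega> * Z n j \<omega> \<partial>M)"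
      proof (rule sum.cong[OF refl])
        fix i assume i: "i \<in> ?A"
        show "(\<integral>\<omega>. (\<Sum>j\<in>?A. Z n i \<omega> * Z n j \<omega>) \<partial>M) = (\<Sum>j\<in>?A. \<integral>\<omega>. Z n i \<omega> * Z n j \<omega> \<partial>M)"
          by (rule Bochner_Integration.integral_sum) (rule intij[OF i])
      qed
    qed
    also have "\<dots> = (\<Sum>i\<in>?A. \<integral>\<omega>. (Z n i \<omega>)^2 \<partial>M)" by (intro sum.cong refl inner)
    also have "\<dots> = (\<Sum>i\<in>?A. (\<integral>\<omega>. (f (s n (i - 1)) \<omega>)^2 \<partial>M) * (2 * (s n i - s n (i - 1))^2))"
    proof (rule sum.cong[OF refl])
      fix i assume i: "i \<in> ?A"
      show "(\<integral>\<omega>. (Z n i \<omega>)^2 \<partial>M) = (\<integral>\<omega>. (f (s n (i - 1)) \<omega>)^2 \<partial>M) * (2 * (s n i - s n (i - 1))^2)"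
        using Z2[OF inA[OF i]] by (rule conjunct2)
    qed
    also have "\<dots> \<le> (\<Sum>i\<in>?A. (2 * C * (1/2)^n) * (s n i - s n (i - 1)))"
    proof (rule sum_mono)
      fix i assume i: "i \<in> ?A"
      let ?d = "s n i - s n (i - 1)"
      have d0: "0 < ?d" using sT(3)[OF inA[OF i]] by simp
      have dh: "?d \<le> (1/2)^n" using small[OF i] .
      have e0: "0 \<le> (\<integral>\<omega>. (f (s n (i - 1)) \<omega>)^2 \<partial>M)" by (rule integral_nonneg_AE) simp
      have eC: "(\<integral>\<omega>. (f (s n (i - 1)) \<omega>)^2 \<partial>M) \<le> C" using C[OF sT(6)[OF inA[OF i]]] by blast
      have "(\<integral>\<omega>. (f (s n (i - 1)) \<omega>)^2 \<partial>M) * (2 * ?d^2) \<le> C * (2 * ?d^2)"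
        by (rule mult_right_mono[OF eC]) simp
      also have "\<dots> \<le> C * (2 * (?d * (1/2)^n))"
        using d0 dh C0 by (intro mult_left_mono) (auto simp: power2_eq_square)
      finally show "(\<integral>\<omega>. (f (s n (i - 1)) \<omega>)^2 \<partial>M) * (2 * ?d^2) \<le> (2 * C * (1/2)^n) * ?d"
        by (simp add: algebra_simps)
    qed
    also have "\<dots> = (2 * C * (1/2)^n) * (\<Sum>i\<in>?A. s n i - s n (i - 1))" by (simp add: sum_distrib_left)
    also have "\<dots> \<le> (2 * C * (1/2)^n) * (\<Sum>i\<in>{1..N n}. s n i - s n (i - 1))"
    proof (rule mult_left_mono)
      show "0 \<le> 2 * C * (1/2)^n" using C0 by simp
      show "(\<Sum>i\<in>?A. s n i - s n (i - 1)) \<le> (\<Sum>i\<in>{1..N n}. s n i - s n (i - 1))"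
      proof (rule sum_mono2[OF _ clsub])
        fix b assume "b \<in> {1..N n} - ?A"
        then have "b \<in> {1..N n}" by blast
        from sT(3)[OF this] show "0 \<le> s n b - s n (b - 1)" by simp
      qed simp
    qed
    also have "\<dots> = (2 * C * (t2 - t1)) * (1/2)^n"
      using telescope[of "s n" "N n"] part_start part_end by simp
    finally show ?thesis using intY by simp
  qed
  have AEY: "AE \<omega> in M. (\<lambda>n. Y n \<omega>) \<longlonglongrightarrow> 0"
    by (rule AE_tendsto_of_L2[OF Ym]) (use Ybound in blast)+
  have eqY: "(\<Sum>i\<in>cls n. f (s n (i - 1)) \<omega> * (W (s n i) \<omega> - W (s n (i - 1)) \<omega>)\<^sup>2)
               - (\<Sum>i\<in>cls n. f (s n (i - 1)) \<omega> * (s n i - s n (i - 1))) = Y n \<omega>" for n \<omega>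
    unfolding Y_def Z_def by (simp add: sum_subtractf right_diff_distrib)
  show ?thesis using AEY unfolding eqY[symmetric] cls_def .
qed

end
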